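(* Let $G=(G_1,G_2,G_3)$ be a mean zero Gaussian vector whose covariance matrix $\Gamma$ is strictly positive definite and irreducible, with $\Gamma^{-1}$ an $M$-matrix, and suppose $\Gamma_{i,j}\le\Gamma_{i,i}\wedge\Gamma_{j,j}$ for all $i,j$. Let $D_i=\sum_k(\Gamma^{-1})_{i,k}$ and $\mathcal D=\{(i,j):D_iD_j<0\}$. Then the upper bound for the critical point of $G$ is non-zero: if $\mathcal D\neq\emptyset$, then $\inf_{(i,j)\in\mathcal D}\big((\Gamma^{-1})_{i,j}/(2D_iD_j)\big)^{1/2}>0$; equivalently, there is no $(i,j)\in\mathcal D$ with $(\Gamma^{-1})_{i,j}=0$. *)

theory Defs
  imports "HOL-Analysis.Analysis"
begin

definition pos_def_matrix :: "real^'n^'n \<Rightarrow> bool" where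
  "pos_def_matrix A \<longleftrightarrow> transpose A = A \<and> (\<forall>x. x \<noteq> 0 \<longrightarrow> x \<bullet> (A *v x) > 0)"

definition irreducible_matrix :: "real^'n^'n \<Rightarrow> bool" where
  "irreducible_matrix A \<longleftrightarrow>
     \<not> (\<exists>I. I \<noteq> {} \<and> I \<noteq> UNIV \<and> (\<forall>i\<in>I. \<forall>j. j \<notin> I \<longrightarrow> A $ i $ j = 0))"

definition M_matrix :: "real^'n^'n \<Rightarrow> bool" where
  "M_matrix A \<longleftrightarrow> (\<forall>i j. i \<noteq> j \<longrightarrow> A $ i $ j \<le> 0) \<and> invertible A \<and>
     (\<forall>i j. matrix_inv A $ i $ j \<ge> 0)"

end

theory Submission
  imports Defs
begin
lemma inf_pos: "finite (S::'a set) \<Longrightarrow> S \<noteq> {} \<Longrightarrow> (\<And>x. x\<in>S \<Longrightarrow> (f x::real) > 0) \<Longrightarrow> (INF x\<in>S. f x) > 0"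
proof -
  assume a: "finite S" "S \<noteq> {}" "\<And>x. x\<in>S \<Longrightarrow> (f x::real) > 0"
  have e: "(INF x\<in>S. f x) = Min (f ` S)" using a by (intro cInf_eq_Min) auto
  have "Min (f ` S) \<in> f ` S" using a by (intro Min_in) auto
  then show ?thesis using a(3) e by auto
qed

lemma third: fixes i j :: 3 assumes "i \<noteq> j"
  obtains k where "k \<noteq> i" "k \<noteq> j" "UNIV = {i, j, k}"
proof -
  have c3: "card (UNIV::3 set) = 3" by simp
  have "card {i, j} = 2" using assms by simp
  then have "{i, j} \<noteq> UNIV" using c3 by auto
  then obtain k where k: "k \<notin> {i, j}" by blast
  have "card {i, j, k} = 3" using k assms by (auto simp: card_insert_if)
  then have "{i, j, k} = UNIV" using c3 by (metis card_subset_eq finite subset_UNIV)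
  then show ?thesis using that k by auto
qed

theorem corollary7p1:
  fixes \<Gamma> :: "real^3^3"
  assumes "pos_def_matrix \<Gamma>"
    and "irreducible_matrix \<Gamma>"
    and "M_matrix (matrix_inv \<Gamma>)"
    and "\<forall>i j. \<Gamma> $ i $ j \<le> min (\<Gamma> $ i $ i) (\<Gamma> $ j $ j)"
  defines "D \<equiv> (\<lambda>i. \<Sum>k\<in>UNIV. matrix_inv \<Gamma> $ i $ k)"
    and "\<D> \<equiv> {(i, j). (\<Sum>k\<in>UNIV. matrix_inv \<Gamma> $ i $ k) * (\<Sum>k\<in>UNIV. matrix_inv \<Gamma> $ j $ k) < 0}"
  shows "\<D> \<noteq> {} \<longrightarrow>
    (INF p\<in>\<D>. sqrt (matrix_inv \<Gamma> $ fst p $ snd p / (2 * D (fst p) * D (snd p)))) > 0"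
proof
  assume ne: "\<D> \<noteq> {}"
  define A where "A = matrix_inv \<Gamma>"
  have symG: "transpose \<Gamma> = \<Gamma>" and pd: "\<And>x. x \<noteq> 0 \<Longrightarrow> x \<bullet> (\<Gamma> *v x) > 0"
    using assms(1) unfolding pos_def_matrix_def by auto
  have "\<forall>x. \<Gamma> *v x = 0 \<longrightarrow> x = 0"
    using pd by (metis inner_zero_right less_irrefl)
  then have "\<exists>B. B ** \<Gamma> = mat 1" using matrix_left_invertible_ker by blast
  then have inv: "invertible \<Gamma>" using invertible_left_inverse by blast
  then obtain B where B1: "\<Gamma> ** B = mat 1" and B2: "B ** \<Gamma> = mat 1"
    unfolding invertible_def by blast
  have GA: "\<Gamma> ** A = mat 1" and AG: "A ** \<Gamma> = mat 1"
    unfolding A_def matrix_inv_def using someI[of "\<lambda>A'. \<Gamma> ** A' = mat 1 \<and> A' ** \<Gamma> = mat 1" B] B1 B2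
    by auto
  have "transpose A ** \<Gamma> = mat 1"
    using GA by (metis matrix_transpose_mul symG transpose_mat)
  then have "transpose A = A"
    by (metis GA matrix_mul_assoc matrix_mul_lid matrix_mul_rid)
  then have symA: "A $ i $ j = A $ j $ i" for i j
  proof -
    have "transpose A $ i $ j = A $ j $ i" by (simp add: transpose_def)
    then show ?thesis using \<open>transpose A = A\<close> by simp
  qed
  have offd: "\<And>i j. i \<noteq> j \<Longrightarrow> A $ i $ j \<le> 0"
    using assms(3) unfolding M_matrix_def A_def by auto
  have Gkk: "\<Gamma> $ k $ k > 0" for k
  proof -
    have "axis k 1 \<bullet> (\<Gamma> *v axis k 1) > 0" using pd by (simp add: axis_eq_0_iff)
    then show ?thesis
      by (simp add: inner_axis' matrix_vector_mult_basis column_def)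
  qed
  have Aii: "A $ i $ i > 0" for i
  proof -
    define x where "x = A *v axis i 1"
    have Gx: "\<Gamma> *v x = axis i 1" unfolding x_def
      by (simp add: matrix_vector_mul_assoc GA)
    then have "x \<noteq> 0" by (auto simp: axis_eq_0_iff)
    then have "x \<bullet> (\<Gamma> *v x) > 0" using pd by blast
    moreover have "x \<bullet> (\<Gamma> *v x) = x $ i" unfolding Gx by (simp add: inner_axis)
    moreover have "x $ i = A $ i $ i" unfolding x_def by (simp add: matrix_vector_mult_basis column_def)
    ultimately show ?thesis by simp
  qed
  have rowz: "(\<Sum>l\<in>UNIV. A $ i $ l * \<Gamma> $ l $ k) = 0" if "i \<noteq> k" for i k
  proof -
    have "(A ** \<Gamma>) $ i $ k = 0" using AG that by (simp add: mat_def)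
    then show ?thesis by (simp add: matrix_matrix_mult_def)
  qed
  have key: "D i \<ge> 0" if ij0: "i \<noteq> j" "A $ i $ j = 0" for i j
  proof -
    obtain k where k: "k \<noteq> i" "k \<noteq> j" "UNIV = {i, j, k}"
      using third[OF ij0(1)] by blast
    have s: "(\<Sum>l\<in>UNIV. f l) = f i + f j + f k" for f :: "3 \<Rightarrow> real"
      using k ij0(1) by (simp only: k(3)) (simp add: ac_simps)
    have e: "A $ i $ i * \<Gamma> $ i $ k + A $ i $ k * \<Gamma> $ k $ k = 0"
      using rowz[of i k] k that by (simp add: s)
    have Di: "D i = A $ i $ i + A $ i $ k"
      unfolding D_def A_def[symmetric] using that by (simp add: s)
    have le: "\<Gamma> $ i $ k \<le> \<Gamma> $ k $ k" using assms(4) by (meson min.boundedE)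
    have "\<Gamma> $ k $ k * D i = A $ i $ i * (\<Gamma> $ k $ k - \<Gamma> $ i $ k)"
      using e Di by (simp add: algebra_simps)
    also have "\<dots> \<ge> 0" using Aii[of i] le by simp
    finally show ?thesis using Gkk[of k] by (simp add: zero_le_mult_iff)
  qed
  have pos: "sqrt (A $ fst p $ snd p / (2 * D (fst p) * D (snd p))) > 0" if "p \<in> \<D>" for p
  proof -
    obtain i j where p: "p = (i, j)" by (cases p)
    have neg: "D i * D j < 0" using that p unfolding \<D>_def D_def by simp
    have ij: "i \<noteq> j" using neg by (metis not_square_less_zero)
    have "A $ i $ j \<noteq> 0"
    proof
      assume "A $ i $ j = 0"
      then have "D i \<ge> 0" "D j \<ge> 0" using key[of i j] key[of j i] ij symA by auto
      then show False using neg by (meson mult_nonneg_nonneg not_less)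
    qed
    then have "A $ i $ j < 0" using offd[OF ij] by simp
    then have "A $ i $ j / (2 * D i * D j) > 0" using neg
      by (simp add: divide_neg_neg mult.assoc)
    then show ?thesis using p by simp
  qed
  have pos': "sqrt (matrix_inv \<Gamma> $ fst p $ snd p / (2 * D (fst p) * D (snd p))) > 0" if "p \<in> \<D>" for p
    using pos[OF that] unfolding A_def .
  have fin: "finite \<D>" by simp
  show "(INF p\<in>\<D>. sqrt (matrix_inv \<Gamma> $ fst p $ snd p / (2 * D (fst p) * D (snd p)))) > 0"
    by (rule inf_pos[where f="\<lambda>p. sqrt (matrix_inv \<Gamma> $ fst p $ snd p / (2 * D (fst p) * D (snd p)))", OF fin ne pos'])
qed

end
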